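(* Let $A$ be a $3\times3$ matrix with pairwise distinct eigenvalues $\lambda_1,\lambda_2,\lambda_3$ such that $\lambda_1+\lambda_2\neq 0$, and let $h>0$. Define $$\phi=\frac{(\lambda_3^2-\lambda_2^2)(\lambda_2^2e^{\lambda_1h}-\lambda_1^2e^{\lambda_2h})-(\lambda_2^2-\lambda_1^2)(\lambda_3^2e^{\lambda_2h}-\lambda_2^2e^{\lambda_3h})}{\lambda_1\lambda_2(\lambda_2-\lambda_1)(\lambda_3^2-\lambda_2^2)-\lambda_2\lambda_3(\lambda_3-\lambda_2)(\lambda_2^2-\lambda_1^2)},$$ $$\psi=\frac{\lambda_2^2e^{\lambda_1h}-\lambda_1^2e^{\lambda_2h}-\lambda_1\lambda_2(\lambda_2-\lambda_1)\phi}{\lambda_2^2-\lambda_1^2},\qquad \theta=\frac{e^{\lambda_3h}-\psi-\lambda_3\phi}{\lambda_3^2\phi^2}.$$ Then (whenever these expressions are defined) the explicit difference scheme $$\frac{\mathbf{x}_{k+1}-\psi\mathbf{x}_k}{\phi}=A\mathbf{x}_k+\theta\phi A^2\mathbf{x}_k$$ is exact for the system $\mathbf{x}'=A\mathbf{x}$.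
   Context: A one-step difference scheme with step size $h>0$ for $\mathbf{x}'=M\mathbf{x}$ is called exact if for every initial vector $\mathbf{x}_0$ the sequence $(\mathbf{x}_k)$ it generates satisfies $\mathbf{x}_k=\mathbf{x}(kh)$ for all $k\ge 0$, where $\mathbf{x}(t)$ solves $\mathbf{x}'=M\mathbf{x}$, $\mathbf{x}(0)=\mathbf{x}_0$. *)

theory Defs
  imports "HOL-Analysis.Analysis"
begin

definition is_eigenvalue :: "complex^'n^'n \<Rightarrow> complex \<Rightarrow> bool" where
  "is_eigenvalue M l \<longleftrightarrow> (\<exists>v. v \<noteq> 0 \<and> M *v v = l *s v)"

definition exact_scheme ::
  "(complex^'n \<Rightarrow> complex^'n \<Rightarrow> bool) \<Rightarrow> real \<Rightarrow> complex^'n^'n \<Rightarrow> bool" where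
  "exact_scheme step h M \<longleftrightarrow>
     (\<forall>xs x. (\<forall>k. step (xs k) (xs (Suc k))) \<and>
        x 0 = xs 0 \<and>
        (\<forall>t\<ge>0. (x has_vector_derivative (M *v x t)) (at t within {0..}))
        \<longrightarrow> (\<forall>k. xs k = x (real k * h)))"

end

theory Submission
  imports Defs
begin


definition Ap :: "complex^3^3 \<Rightarrow> complex \<Rightarrow> complex \<Rightarrow> complex \<Rightarrow> complex^3 \<Rightarrow> complex^3" where
  "Ap A a b c y = a *s (A *v (A *v y)) + b *s (A *v y) + c *s y"

lemma Ap_add: "Ap A a b c (y + z) = Ap A a b c y + Ap A a b c z"
  by (simp add: Ap_def matrix_vector_right_distrib vec_eq_iff algebra_simps)

lemma Ap_scale: "Ap A a b c (k *s y) = k *s Ap A a b c y"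
  by (simp add: Ap_def vec.scale vec_eq_iff algebra_simps)

lemma Ap_comm: "A *v Ap A a b c y = Ap A a b c (A *v y)"
  by (simp add: Ap_def vec.scale matrix_vector_right_distrib)

lemma Ap_eig: assumes "A *v v = l *s v" shows "Ap A a b c v = (a*l^2 + b*l + c) *s v"
proof -
  have e2: "A *v (A *v v) = (l*l) *s v" using assms by (simp add: vec.scale vector_smult_assoc)
  show ?thesis unfolding Ap_def by (subst e2, subst assms) (simp add: vec_eq_iff algebra_simps power2_eq_square)
qed

lemma Ap_comp: "Ap A a b c (Ap A a' b' c' y) = Ap A a' b' c' (Ap A a b c y)"
  by (simp add: Ap_def vec.scale matrix_vector_right_distrib vec_eq_iff algebra_simps)

lemma scalar_ode:
  fixes g :: "real \<Rightarrow> complex"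
  assumes d: "\<And>t. t \<ge> 0 \<Longrightarrow> (g has_vector_derivative (l * g t)) (at t within {0..})"
  shows "t \<ge> 0 \<Longrightarrow> g t = exp (l * of_real t) * g 0"
proof -
  define f where "f t = exp (- (l * of_real t)) * g t" for t
  have e: "((\<lambda>t. exp (- (l * of_real t))) has_vector_derivative (- l * exp (- (l * of_real t)))) (at t within {0..})" for t
  proof -
    have "((\<lambda>z. exp (- (l * z))) has_field_derivative (- l * exp (- (l * of_real t)))) (at (of_real t))"
      by (auto intro!: derivative_eq_intros)
    from has_vector_derivative_real_field[OF this] show ?thesis .
  qed
  have D: "(f has_vector_derivative 0) (at t within {0..})" if "t \<in> {0..}" for t
  proof -
    have "(f has_vector_derivative (exp (- (l * of_real t)) * (l * g t) + (- l * exp (- (l * of_real t))) * g t)) (at t within {0..})"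
      unfolding f_def using that by (intro has_vector_derivative_mult e d) auto
    then show ?thesis by (simp add: algebra_simps)
  qed
  then obtain c where c: "\<And>t. t \<in> {0..} \<Longrightarrow> f t = c"
    using has_vector_derivative_zero_constant[of "{0..}" f, OF _ D] by (metis convex_real_interval(1))
  assume "t \<ge> 0"
  then have "f t = f 0" using c by simp
  then show ?thesis by (simp add: f_def exp_minus field_simps)
qed

lemma scaleR_vec_s: "r *\<^sub>R (y::complex^3) = (complex_of_real r) *s y"
  by (simp add: vec_eq_iff, simp add: scaleR_conv_of_real)

lemma Ap_bl: "bounded_linear (\<lambda>y. Ap A a b c y $ j)"
proof -
  have "linear (\<lambda>y. Ap A a b c y $ j)"
    by (rule linearI) (simp_all add: Ap_add scaleR_vec_s Ap_scale scaleR_conv_of_real)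
  then show ?thesis by (simp add: linear_conv_bounded_linear)
qed

lemma Ap_ode:
  assumes x: "\<And>t. t \<ge> 0 \<Longrightarrow> (x has_vector_derivative (A *v x t)) (at t within {0..})"
    and ev: "\<And>y. A *v Ap A a b c y = l *s Ap A a b c y"
    and t: "t \<ge> 0"
  shows "Ap A a b c (x t) = exp (l * of_real t) *s Ap A a b c (x 0)"
proof -
  have "Ap A a b c (x t) $ j = exp (l * of_real t) * Ap A a b c (x 0) $ j" for j
  proof (rule scalar_ode[OF _ t, where g="\<lambda>t. Ap A a b c (x t) $ j"])
    fix s :: real assume s: "s \<ge> 0"
    have "((\<lambda>t. Ap A a b c (x t) $ j) has_vector_derivative Ap A a b c (A *v x s) $ j) (at s within {0..})"
      by (rule bounded_linear.has_vector_derivative[OF Ap_bl x[OF s]])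
    moreover have "Ap A a b c (A *v x s) $ j = l * Ap A a b c (x s) $ j"
      using ev[of "x s"] by (simp add: Ap_comm[symmetric])
    ultimately show "((\<lambda>t. Ap A a b c (x t) $ j) has_vector_derivative l * Ap A a b c (x s) $ j) (at s within {0..})"
      by simp
  qed
  then show ?thesis by (simp add: vec_eq_iff)
qed


lemma interp:
  fixes l1 l2 l3 e1 e2 e3 \<phi> \<psi> c :: complex
  assumes dist: "l1 \<noteq> l2" "l1 \<noteq> l3" "l2 \<noteq> l3" and sum: "l1 + l2 \<noteq> 0"
    and den: "l1 * l2 * (l2 - l1) * (l3\<^sup>2 - l2\<^sup>2) - l2 * l3 * (l3 - l2) * (l2\<^sup>2 - l1\<^sup>2) \<noteq> 0"
    and phi: "\<phi> = ((l3\<^sup>2 - l2\<^sup>2) * (l2\<^sup>2 * e1 - l1\<^sup>2 * e2)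
                      - (l2\<^sup>2 - l1\<^sup>2) * (l3\<^sup>2 * e2 - l2\<^sup>2 * e3))
                  / (l1 * l2 * (l2 - l1) * (l3\<^sup>2 - l2\<^sup>2) - l2 * l3 * (l3 - l2) * (l2\<^sup>2 - l1\<^sup>2))"
    and psi: "\<psi> = (l2\<^sup>2 * e1 - l1\<^sup>2 * e2 - l1 * l2 * (l2 - l1) * \<phi>) / (l2\<^sup>2 - l1\<^sup>2)"
    and c: "c = (e3 - \<psi> - l3 * \<phi>) / l3\<^sup>2"
    and l3: "l3 \<noteq> 0"
  shows "\<psi> + \<phi> * l1 + c * l1\<^sup>2 = e1" "\<psi> + \<phi> * l2 + c * l2\<^sup>2 = e2" "\<psi> + \<phi> * l3 + c * l3\<^sup>2 = e3"
proof -
  have l2: "l2 \<noteq> 0" using den by auto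
  have d12: "l2\<^sup>2 - l1\<^sup>2 \<noteq> 0"
  proof
    assume "l2\<^sup>2 - l1\<^sup>2 = 0"
    then have "(l2 - l1) * (l2 + l1) = 0" by (simp add: power2_eq_square algebra_simps)
    then show False using dist sum by (auto simp: add.commute)
  qed
  define r1 where "r1 = \<psi> + \<phi> * l1 + c * l1\<^sup>2 - e1"
  define r2 where "r2 = \<psi> + \<phi> * l2 + c * l2\<^sup>2 - e2"
  define r3 where "r3 = \<psi> + \<phi> * l3 + c * l3\<^sup>2 - e3"
  have R3: "r3 = 0" unfolding r3_def c using l3 by (simp add: field_simps power2_eq_square)
  have R12: "\<psi> * (l2\<^sup>2 - l1\<^sup>2) + \<phi> * (l1 * l2 * (l2 - l1)) - (l2\<^sup>2 * e1 - l1\<^sup>2 * e2) = 0"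
    using psi d12 by (simp add: field_simps)
  have P: "\<phi> * (l1 * l2 * (l2 - l1) * (l3\<^sup>2 - l2\<^sup>2) - l2 * l3 * (l3 - l2) * (l2\<^sup>2 - l1\<^sup>2)) =
      ((l3\<^sup>2 - l2\<^sup>2) * (l2\<^sup>2 * e1 - l1\<^sup>2 * e2) - (l2\<^sup>2 - l1\<^sup>2) * (l3\<^sup>2 * e2 - l2\<^sup>2 * e3))"
    using phi den by simp
  have "(l3\<^sup>2 - l2\<^sup>2) * (\<psi> * (l2\<^sup>2 - l1\<^sup>2) + \<phi> * (l1 * l2 * (l2 - l1)) - (l2\<^sup>2 * e1 - l1\<^sup>2 * e2))
      - (l2\<^sup>2 - l1\<^sup>2) * (\<psi> * (l3\<^sup>2 - l2\<^sup>2) + \<phi> * (l2 * l3 * (l3 - l2)) - (l3\<^sup>2 * e2 - l2\<^sup>2 * e3)) = 0"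
    using P by (simp add: algebra_simps)
  with R12 d12 have R23: "\<psi> * (l3\<^sup>2 - l2\<^sup>2) + \<phi> * (l2 * l3 * (l3 - l2)) - (l3\<^sup>2 * e2 - l2\<^sup>2 * e3) = 0"
    by simp
  have "l3\<^sup>2 * r2 - l2\<^sup>2 * r3 = \<psi> * (l3\<^sup>2 - l2\<^sup>2) + \<phi> * (l2 * l3 * (l3 - l2)) - (l3\<^sup>2 * e2 - l2\<^sup>2 * e3)"
    unfolding r2_def r3_def by (simp add: algebra_simps power2_eq_square)
  with R23 R3 l3 have R2: "r2 = 0" by simp
  have "l2\<^sup>2 * r1 - l1\<^sup>2 * r2 = \<psi> * (l2\<^sup>2 - l1\<^sup>2) + \<phi> * (l1 * l2 * (l2 - l1)) - (l2\<^sup>2 * e1 - l1\<^sup>2 * e2)"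
    unfolding r2_def r1_def by (simp add: algebra_simps power2_eq_square)
  with R12 R2 l2 have R1: "r1 = 0" by simp
  show "\<psi> + \<phi> * l1 + c * l1\<^sup>2 = e1" using R1 r1_def by simp
  show "\<psi> + \<phi> * l2 + c * l2\<^sup>2 = e2" using R2 r2_def by simp
  show "\<psi> + \<phi> * l3 + c * l3\<^sup>2 = e3" using R3 r3_def by simp
qed

lemma Ap_zero: "Ap A a b c 0 = 0"
  by (simp add: Ap_def)

lemma Gfact: assumes "A *v v = l *s v" shows "Ap A 1 (-(p+q)) (p*q) v = ((l-p)*(l-q)) *s v"
proof -
  have "Ap A 1 (-(p+q)) (p*q) v = (1*l^2 + (-(p+q))*l + p*q) *s v" by (rule Ap_eig[OF assms])
  moreover have "(1*l^2 + (-(p+q))*l + p*q) = (l-p)*(l-q)" by (simp add: algebra_simps power2_eq_square)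
  ultimately show ?thesis by metis
qed

lemma Nfact: assumes "A *v v = l *s v" shows "Ap A 0 1 (-m) v = (l-m) *s v"
proof -
  have "Ap A 0 1 (-m) v = (0*l^2 + 1*l + -m) *s v" by (rule Ap_eig[OF assms])
  then show ?thesis by simp
qed

lemma N0: assumes "Ap A 0 1 (-l) z = 0" shows "A *v z = l *s z"
proof -
  have "\<forall>i. (A *v z)$i + - l * z$i = 0" using assms by (simp add: Ap_def vec_eq_iff)
  then show ?thesis by (simp add: vec_eq_iff add_eq_0_iff)
qed


lemma Ap_nth: "(Ap A a b c y) $ i = a * (A *v (A *v y)) $ i + b * (A *v y) $ i + c * y $ i"
  by (simp add: Ap_def)

lemma lag_scalar:
  fixes l1 l2 l3 z u w :: complex
  assumes "l1 \<noteq> l2" "l1 \<noteq> l3" "l2 \<noteq> l3"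
  shows "z = 1/((l1-l2)*(l1-l3)) * (1 * u + (-(l2+l3))*w + (l2*l3)*z) + 1/((l2-l1)*(l2-l3)) * (1 * u + (-(l1+l3))*w + (l1*l3)*z)
     + 1/((l3-l1)*(l3-l2)) * (1 * u + (-(l1+l2))*w + (l1*l2)*z)"
proof -
  have a: "l1 - l2 \<noteq> 0" "l1 - l3 \<noteq> 0" "l2 - l3 \<noteq> 0" "l2 - l1 \<noteq> 0" "l3 - l1 \<noteq> 0" "l3 - l2 \<noteq> 0"
    using assms by auto
  show ?thesis using a by (simp add: divide_simps) (simp add: algebra_simps)
qed

lemma lagrange:
  fixes l1 l2 l3 :: complex
  assumes "l1 \<noteq> l2" "l1 \<noteq> l3" "l2 \<noteq> l3"
  shows "y = (1/((l1-l2)*(l1-l3))) *s Ap A 1 (-(l2+l3)) (l2*l3) y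
           + (1/((l2-l1)*(l2-l3))) *s Ap A 1 (-(l1+l3)) (l1*l3) y
           + (1/((l3-l1)*(l3-l2))) *s Ap A 1 (-(l1+l2)) (l1*l2) y"
proof (subst vec_eq_iff, rule allI)
  fix i
  show "y $ i = ((1/((l1-l2)*(l1-l3))) *s Ap A 1 (-(l2+l3)) (l2*l3) y
           + (1/((l2-l1)*(l2-l3))) *s Ap A 1 (-(l1+l3)) (l1*l3) y
           + (1/((l3-l1)*(l3-l2))) *s Ap A 1 (-(l1+l2)) (l1*l2) y) $ i"
    unfolding vector_add_component vector_smult_component Ap_nth
    by (rule lag_scalar[OF assms])
qed

theorem mainTheorem12:
  fixes A :: "complex^3^3" and l1 l2 l3 :: complex and h :: real
    and \<phi> \<psi> \<theta> :: complex
  assumes ev: "is_eigenvalue A l1" "is_eigenvalue A l2" "is_eigenvalue A l3"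
    and dist: "l1 \<noteq> l2" "l1 \<noteq> l3" "l2 \<noteq> l3"
    and sum: "l1 + l2 \<noteq> 0"
    and h: "h > 0"
    and den: "l1 * l2 * (l2 - l1) * (l3\<^sup>2 - l2\<^sup>2) - l2 * l3 * (l3 - l2) * (l2\<^sup>2 - l1\<^sup>2) \<noteq> 0"
    and phi_def: "\<phi> = ((l3\<^sup>2 - l2\<^sup>2) * (l2\<^sup>2 * exp (l1 * h) - l1\<^sup>2 * exp (l2 * h))
                      - (l2\<^sup>2 - l1\<^sup>2) * (l3\<^sup>2 * exp (l2 * h) - l2\<^sup>2 * exp (l3 * h)))
                  / (l1 * l2 * (l2 - l1) * (l3\<^sup>2 - l2\<^sup>2) - l2 * l3 * (l3 - l2) * (l2\<^sup>2 - l1\<^sup>2))"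
    and psi_def: "\<psi> = (l2\<^sup>2 * exp (l1 * h) - l1\<^sup>2 * exp (l2 * h) - l1 * l2 * (l2 - l1) * \<phi>)
                  / (l2\<^sup>2 - l1\<^sup>2)"
    and theta_def: "\<theta> = (exp (l3 * h) - \<psi> - l3 * \<phi>) / (l3\<^sup>2 * \<phi>\<^sup>2)"
    and defined: "\<phi> \<noteq> 0" "l3 \<noteq> 0"
  shows "exact_scheme
           (\<lambda>xk xk1. inverse \<phi> *s (xk1 - \<psi> *s xk) = A *v xk + (\<theta> * \<phi>) *s ((A ** A) *v xk))
           h A"
  
proof -
  obtain v1 where v1: "v1 \<noteq> 0" "A *v v1 = l1 *s v1" using ev(1) unfolding is_eigenvalue_def by blast
  obtain v2 where v2: "v2 \<noteq> 0" "A *v v2 = l2 *s v2" using ev(2) unfolding is_eigenvalue_def by blast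
  obtain v3 where v3: "v3 \<noteq> 0" "A *v v3 = l3 *s v3" using ev(3) unfolding is_eigenvalue_def by blast
  define G1 where "G1 = Ap A 1 (-(l2+l3)) (l2*l3)"
  define G2 where "G2 = Ap A 1 (-(l1+l3)) (l1*l3)"
  define G3 where "G3 = Ap A 1 (-(l1+l2)) (l1*l2)"
  have G1v: "G1 v1 = ((l1-l2)*(l1-l3)) *s v1" "G1 v2 = 0" "G1 v3 = 0"
    unfolding G1_def using Gfact[OF v1(2)] Gfact[OF v2(2)] Gfact[OF v3(2)] by auto
  have G2v: "G2 v1 = 0" "G2 v2 = ((l2-l1)*(l2-l3)) *s v2" "G2 v3 = 0"
    unfolding G2_def using Gfact[OF v1(2)] Gfact[OF v2(2)] Gfact[OF v3(2)] by auto
  have G3v: "G3 v1 = 0" "G3 v2 = 0" "G3 v3 = ((l3-l1)*(l3-l2)) *s v3"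
    unfolding G3_def using Gfact[OF v1(2)] Gfact[OF v2(2)] Gfact[OF v3(2)] by auto
  have nsp1: "v1 \<notin> vec.span {v2, v3}"
  proof
    assume "v1 \<in> vec.span {v2, v3}"
    then obtain k m where "v1 - k *s v2 - m *s v3 = 0"
      by (auto simp: vec.span_insert vec.span_empty)
    then have "v1 = k *s v2 + m *s v3" by (simp add: field_simps)
    then have "G1 v1 = k *s G1 v2 + m *s G1 v3" by (simp add: G1_def Ap_add Ap_scale)
    then have "G1 v1 = 0" using G1v by simp
    with G1v(1) dist v1(1) show False by simp
  qed
  have nsp2: "v2 \<notin> vec.span {v3}"
  proof
    assume "v2 \<in> vec.span {v3}"
    then obtain k where "v2 - k *s v3 = 0"
      by (auto simp: vec.span_insert vec.span_empty)
    then have "v2 = k *s v3" by (simp add: field_simps)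
    then have "Ap A 0 1 (-l3) v2 = 0" by (simp add: Ap_scale Nfact[OF v3(2)])
    with Nfact[OF v2(2)] dist v2(1) show False by simp
  qed
  have ne: "v1 \<noteq> v2" "v1 \<noteq> v3" "v2 \<noteq> v3"
    using nsp1 nsp2 vec.span_base[of v2 "{v2,v3}"] vec.span_base[of v3 "{v2,v3}"] vec.span_base[of v3 "{v3}"] by auto
  have ind: "vec.independent {v1, v2, v3}"
    using ne nsp1 nsp2 v3(1) by (simp add: vec.independent_insert vec.span_empty)
  have card: "card {v1, v2, v3} = 3" using ne by simp
  have spanU: "UNIV \<subseteq> vec.span {v1, v2, v3}"
    by (rule vec.card_ge_dim_independent) (use ind card in \<open>auto simp: vec_dim_card card_cart_basis\<close>)
  have dec: "\<exists>a b c. y = a *s v1 + b *s v2 + c *s v3" for y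
  proof -
    have "y \<in> vec.span {v1, v2, v3}" using spanU by auto
    then obtain a b c where "y - a *s v1 - b *s v2 - c *s v3 = 0"
      by (auto simp: vec.span_insert vec.span_empty)
    then have "y = a *s v1 + b *s v2 + c *s v3" by (simp add: field_simps)
    then show ?thesis by blast
  qed
  have zero: "Ap A a b c (Ap A a' b' c' y) = 0"
    if "Ap A a b c (Ap A a' b' c' v1) = 0" "Ap A a b c (Ap A a' b' c' v2) = 0" "Ap A a b c (Ap A a' b' c' v3) = 0"
    for a b c a' b' c' y
  proof -
    obtain p q r where "y = p *s v1 + q *s v2 + r *s v3" using dec by blast
    then show ?thesis using that by (simp add: Ap_add Ap_scale)
  qed
  have E1: "A *v G1 y = l1 *s G1 y" for y
    by (rule N0, unfold G1_def, rule zero, fold G1_def)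
       (simp_all add: G1v Ap_zero Ap_scale Nfact[OF v1(2)])
  have E2: "A *v G2 y = l2 *s G2 y" for y
    by (rule N0, unfold G2_def, rule zero, fold G2_def)
       (simp_all add: G2v Ap_zero Ap_scale Nfact[OF v2(2)])
  have E3: "A *v G3 y = l3 *s G3 y" for y
    by (rule N0, unfold G3_def, rule zero, fold G3_def)
       (simp_all add: G3v Ap_zero Ap_scale Nfact[OF v3(2)])
  define e1 where "e1 = exp (l1 * of_real h)"
  define e2 where "e2 = exp (l2 * of_real h)"
  define e3 where "e3 = exp (l3 * of_real h)"
  have c: "\<theta> * \<phi> * \<phi> = (e3 - \<psi> - l3 * \<phi>) / l3\<^sup>2"
    using defined by (simp add: theta_def e3_def field_simps power2_eq_square)
  note ip = interp[OF dist sum den phi_def[folded e1_def e2_def e3_def] psi_def[folded e1_def e2_def] c defined(2)]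
  define P where "P = Ap A (\<theta> * \<phi> * \<phi>) \<phi> \<psi>"
  have PG1: "P (G1 y) = e1 *s G1 y" for y
  proof -
    have "P (G1 y) = (\<theta>*\<phi>*\<phi>*l1^2 + \<phi>*l1 + \<psi>) *s G1 y" unfolding P_def by (rule Ap_eig[OF E1])
    moreover have "\<theta>*\<phi>*\<phi>*l1^2 + \<phi>*l1 + \<psi> = e1" using ip(1) by (simp add: algebra_simps)
    ultimately show ?thesis by metis
  qed
  have PG2: "P (G2 y) = e2 *s G2 y" for y
  proof -
    have "P (G2 y) = (\<theta>*\<phi>*\<phi>*l2^2 + \<phi>*l2 + \<psi>) *s G2 y" unfolding P_def by (rule Ap_eig[OF E2])
    moreover have "\<theta>*\<phi>*\<phi>*l2^2 + \<phi>*l2 + \<psi> = e2" using ip(2) by (simp add: algebra_simps)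
    ultimately show ?thesis by metis
  qed
  have PG3: "P (G3 y) = e3 *s G3 y" for y
  proof -
    have "P (G3 y) = (\<theta>*\<phi>*\<phi>*l3^2 + \<phi>*l3 + \<psi>) *s G3 y" unfolding P_def by (rule Ap_eig[OF E3])
    moreover have "\<theta>*\<phi>*\<phi>*l3^2 + \<phi>*l3 + \<psi> = e3" using ip(3) by (simp add: algebra_simps)
    ultimately show ?thesis by metis
  qed
  note PG = PG1 PG2 PG3
  have P_add: "P (a + b) = P a + P b" for a b unfolding P_def by (rule Ap_add)
  have P_scale: "P (k *s a) = k *s P a" for k a unfolding P_def by (rule Ap_scale)

  show ?thesis unfolding exact_scheme_def
  proof (intro allI impI, elim conjE)
    fix xs :: "nat \<Rightarrow> complex^3" and x :: "real \<Rightarrow> complex^3"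
    assume step: "\<forall>k. inverse \<phi> *s (xs (Suc k) - \<psi> *s xs k) = A *v xs k + (\<theta> * \<phi>) *s ((A ** A) *v xs k)"
      and x0: "x 0 = xs 0"
      and xd: "\<forall>t\<ge>0. (x has_vector_derivative A *v x t) (at t within {0..})"
    define y0 where "y0 = xs 0"
    define X where "X t = (exp (l1 * of_real t) / ((l1-l2)*(l1-l3))) *s G1 y0
           + (exp (l2 * of_real t) / ((l2-l1)*(l2-l3))) *s G2 y0
           + (exp (l3 * of_real t) / ((l3-l1)*(l3-l2))) *s G3 y0" for t
    have xX: "x t = X t" if t: "t \<ge> 0" for t
    proof -
      have o1: "G1 (x t) = exp (l1 * of_real t) *s G1 y0"
        unfolding G1_def y0_def x0[symmetric] by (rule Ap_ode[OF _ E1[unfolded G1_def] t]) (use xd in auto)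
      have o2: "G2 (x t) = exp (l2 * of_real t) *s G2 y0"
        unfolding G2_def y0_def x0[symmetric] by (rule Ap_ode[OF _ E2[unfolded G2_def] t]) (use xd in auto)
      have o3: "G3 (x t) = exp (l3 * of_real t) *s G3 y0"
        unfolding G3_def y0_def x0[symmetric] by (rule Ap_ode[OF _ E3[unfolded G3_def] t]) (use xd in auto)
      show ?thesis
        apply (subst lagrange[OF dist, of "x t" A])
        unfolding G1_def[symmetric] G2_def[symmetric] G3_def[symmetric] o1 o2 o3 X_def
        by (simp add: vector_smult_assoc)
    qed
    have PX: "P (X t) = X (t + h)" for t
      unfolding X_def P_add P_scale PG
        by (simp add: vector_smult_assoc e1_def e2_def e3_def distrib_left exp_add mult_ac)
    have stepP: "xs (Suc k) = P (xs k)" for k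
    proof -
      have "\<forall>i. inverse \<phi> * (xs (Suc k) $ i - \<psi> * xs k $ i) = (A *v xs k) $ i + (\<theta> * \<phi>) * (A *v (A *v xs k)) $ i"
        using step[rule_format, of k] by (simp add: vec_eq_iff matrix_vector_mul_assoc[symmetric] right_diff_distrib mult.assoc)
      then show ?thesis using defined(1)
        by (simp add: P_def Ap_def vec_eq_iff field_simps)
    qed
    fix k show "xs k = x (real k * h)"
    proof (induction k)
      case 0 then show ?case using x0 by simp
    next
      case (Suc k)
      have a: "xs k = X (real k * h)" using Suc.IH xX[of "real k * h"] h by simp
      have b: "real (Suc k) * h = real k * h + h" by (simp add: distrib_right)
      have "xs (Suc k) = X (real (Suc k) * h)" unfolding stepP[of k] a PX b ..
      then show ?case using xX[of "real (Suc k) * h"] h by simp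
    qed
  qed
qed

end
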